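(* In the setting of the context, let $\mathbf{X}\in\{0,1\}^E$ be the indicator vector of the edges matched by MMP-ALG. Then, in the limit $T\to\infty$ with $|U|=o(\sqrt{T})$, $\mathbb{E}[f(\mathbf{X})]\ge (1-1/e)F(\mathbf{x}^* )$.
   Context: Bipartite graph $G=(U,V,E)$; online rounds $t=1,\dots,T$, in each of which independently at most one $v\in V$ arrives, $v$ with probability $p_v$, $\sum_v p_v\le 1$, $r_v=Tp_v\in[0,1]$. Each $u\in U$ can be matched at most once. $f:2^E\to\mathbb{R}_{\ge0}$ is non-negative monotone submodular (identified with a function on $\{0,1\}^E$ via indicator vectors), and $F$ is its multilinear extension $F(\mathbf{x})=\sum_{S\subseteq E}\prod_{e\in S}x_e\prod_{e\notin S}(1-x_e) f(S)$. $E(w)$ denotes the set of edges incident to $w$. $\mathbf{x}^*\in[0,1]^E$ satisfies $\sum_{e\in E(v)}x^*_e\le r_v$ for all $v\in V$ and $\sum_{e\in E(u)}x^*_e\le1$ for all $u\in U$. MMP-ALG: when $v$ arrives, sample at most one edge $e\in E(v)$, each $e$ with probability $x^*_e/r_v$; if $e=(u,v)$ is sampled and $u$ is still unmatched, match $e$, otherwise skip. *)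

theory Defs
  imports "HOL-Probability.Probability"
begin

text \<open>Edges are pairs (u,v) with u in U (offline side) and v in V (online side).\<close>

definition edges_at_v :: "('u \<times> 'v) set \<Rightarrow> 'v \<Rightarrow> ('u \<times> 'v) set" where
  "edges_at_v E v = {e \<in> E. snd e = v}"

definition edges_at_u :: "('u \<times> 'v) set \<Rightarrow> 'u \<Rightarrow> ('u \<times> 'v) set" where
  "edges_at_u E u = {e \<in> E. fst e = u}"

definition arrival_pmf :: "'v set \<Rightarrow> ('v \<Rightarrow> real) \<Rightarrow> 'v option pmf" where
  "arrival_pmf V p = embed_pmf (\<lambda>a. case a of
      None \<Rightarrow> 1 - (\<Sum>v\<in>V. p v)
    | Some v \<Rightarrow> (if v \<in> V then p v else 0))"

definition edge_pmf :: "('u \<times> 'v) set \<Rightarrow> ('u \<times> 'v \<Rightarrow> real) \<Rightarrow> real \<Rightarrow> 'v \<Rightarrow> ('u \<times> 'v) option pmf" where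
  "edge_pmf E x rv v = embed_pmf (\<lambda>a. case a of
      None \<Rightarrow> 1 - (\<Sum>e\<in>edges_at_v E v. x e / rv)
    | Some e \<Rightarrow> (if e \<in> edges_at_v E v then x e / rv else 0))"

definition round_pmf :: "nat \<Rightarrow> 'v set \<Rightarrow> ('u \<times> 'v) set \<Rightarrow> ('v \<Rightarrow> real) \<Rightarrow> ('u \<times> 'v \<Rightarrow> real)
    \<Rightarrow> ('u \<times> 'v) option pmf" where
  "round_pmf T V E p x = bind_pmf (arrival_pmf V p) (\<lambda>a. case a of
      None \<Rightarrow> return_pmf None
    | Some v \<Rightarrow> edge_pmf E x (real T * p v) v)"

definition mmp_step :: "('u \<times> 'v) set \<Rightarrow> ('u \<times> 'v) option \<Rightarrow> ('u \<times> 'v) set" where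
  "mmp_step M a = (case a of
      None \<Rightarrow> M
    | Some (u, v) \<Rightarrow> (if u \<notin> fst ` M then insert (u, v) M else M))"

primrec mmp_run :: "nat \<Rightarrow> nat \<Rightarrow> 'v set \<Rightarrow> ('u \<times> 'v) set \<Rightarrow> ('v \<Rightarrow> real) \<Rightarrow> ('u \<times> 'v \<Rightarrow> real)
    \<Rightarrow> ('u \<times> 'v) set pmf" where
  "mmp_run 0 T V E p x = return_pmf {}"
| "mmp_run (Suc t) T V E p x =
     bind_pmf (mmp_run t T V E p x) (\<lambda>M. map_pmf (mmp_step M) (round_pmf T V E p x))"

definition mmp_alg :: "nat \<Rightarrow> 'v set \<Rightarrow> ('u \<times> 'v) set \<Rightarrow> ('v \<Rightarrow> real) \<Rightarrow> ('u \<times> 'v \<Rightarrow> real)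
    \<Rightarrow> ('u \<times> 'v) set pmf" where
  "mmp_alg T V E p x = mmp_run T T V E p x"

definition monotone_submodular_on :: "'e set \<Rightarrow> ('e set \<Rightarrow> real) \<Rightarrow> bool" where
  "monotone_submodular_on E f \<longleftrightarrow>
     (\<forall>S. S \<subseteq> E \<longrightarrow> 0 \<le> f S) \<and>
     (\<forall>A B. A \<subseteq> B \<and> B \<subseteq> E \<longrightarrow> f A \<le> f B) \<and>
     (\<forall>A B. A \<subseteq> E \<and> B \<subseteq> E \<longrightarrow> f (A \<union> B) + f (A \<inter> B) \<le> f A + f B)"

definition multilinear_ext :: "'e set \<Rightarrow> ('e set \<Rightarrow> real) \<Rightarrow> ('e \<Rightarrow> real) \<Rightarrow> real" where
  "multilinear_ext E f x =
     (\<Sum>S\<in>Pow E. (\<Prod>e\<in>S. x e) * (\<Prod>e\<in>E - S. 1 - x e) * f S)"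

definition mmp_instance :: "nat \<Rightarrow> 'u set \<Rightarrow> 'v set \<Rightarrow> ('u \<times> 'v) set \<Rightarrow> ('v \<Rightarrow> real)
    \<Rightarrow> ('u \<times> 'v \<Rightarrow> real) \<Rightarrow> (('u \<times> 'v) set \<Rightarrow> real) \<Rightarrow> bool" where
  "mmp_instance T U V E p x f \<longleftrightarrow>
     T \<ge> 1 \<and> finite U \<and> finite V \<and> E \<subseteq> U \<times> V \<and>
     (\<forall>v\<in>V. 0 \<le> p v) \<and> (\<Sum>v\<in>V. p v) \<le> 1 \<and> (\<forall>v\<in>V. real T * p v \<le> 1) \<and>
     monotone_submodular_on E f \<and>
     (\<forall>e\<in>E. 0 \<le> x e \<and> x e \<le> 1) \<and>
     (\<forall>v\<in>V. (\<Sum>e\<in>edges_at_v E v. x e) \<le> real T * p v) \<and>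
     (\<forall>u\<in>U. (\<Sum>e\<in>edges_at_u E u. x e) \<le> 1)"

end

theory Submission
  imports Defs
begin

lemma ml_local:
  assumes "\<And>e. e \<in> D \<Longrightarrow> y e = y' e"
  shows "multilinear_ext D h y = multilinear_ext D h y'"
  unfolding multilinear_ext_def
proof (rule sum.cong[OF refl])
  fix S assume "S \<in> Pow D"
  then have "(\<Prod>e\<in>S. y e) = (\<Prod>e\<in>S. y' e)" "(\<Prod>e\<in>D - S. 1 - y e) = (\<Prod>e\<in>D - S. 1 - y' e)"
    using assms by (auto intro!: prod.cong)
  then show "(\<Prod>e\<in>S. y e) * (\<Prod>e\<in>D - S. 1 - y e) * h S = (\<Prod>e\<in>S. y' e) * (\<Prod>e\<in>D - S. 1 - y' e) * h S"
    by simp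
qed

lemma ml_hcong:
  assumes "\<And>S. S \<subseteq> D \<Longrightarrow> h S = h' S"
  shows "multilinear_ext D h y = multilinear_ext D h' y"
  unfolding multilinear_ext_def using assms by (auto intro!: sum.cong)

lemma ml_diff:
  "multilinear_ext D (\<lambda>S. h1 S - h2 S) y = multilinear_ext D h1 y - multilinear_ext D h2 y"
  unfolding multilinear_ext_def by (simp add: sum_subtractf algebra_simps)

lemma ml_neg:
  "multilinear_ext D (\<lambda>S. - h S) y = - multilinear_ext D h y"
  unfolding multilinear_ext_def by (simp add: sum_negf algebra_simps)

lemma ml_nonneg:
  assumes "\<And>S. S \<subseteq> D \<Longrightarrow> 0 \<le> h S" "\<And>e. e \<in> D \<Longrightarrow> 0 \<le> y e \<and> y e \<le> 1"
  shows "0 \<le> multilinear_ext D h y"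
  unfolding multilinear_ext_def
proof (rule sum_nonneg)
  fix S assume S: "S \<in> Pow D"
  have "0 \<le> (\<Prod>e\<in>S. y e)" using S assms(2) by (auto intro!: prod_nonneg)
  moreover have "0 \<le> (\<Prod>e\<in>D - S. 1 - y e)" using S assms(2) by (auto intro!: prod_nonneg)
  ultimately show "0 \<le> (\<Prod>e\<in>S. y e) * (\<Prod>e\<in>D - S. 1 - y e) * h S"
    using S assms(1) by auto
qed

lemma ml_rec:
  assumes "finite D" "c \<in> D"
  shows "multilinear_ext D h y = y c * multilinear_ext (D - {c}) (\<lambda>S. h (insert c S)) y
     + (1 - y c) * multilinear_ext (D - {c}) h y"
proof -
  define D' where "D' = D - {c}"
  have D: "D = insert c D'" "c \<notin> D'" "finite D'" using assms by (auto simp: D'_def)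
  have pw: "Pow D = Pow D' \<union> insert c ` Pow D'" by (simp only: D(1) Pow_insert)
  have disj: "Pow D' \<inter> insert c ` Pow D' = {}" using D(2) by auto
  have inj: "inj_on (insert c) (Pow D')" unfolding inj_on_def by (meson D(2) PowD insert_ident subsetD)
  let ?t = "\<lambda>S. (\<Prod>e\<in>S. y e) * (\<Prod>e\<in>D - S. 1 - y e) * h S"
  have "multilinear_ext D h y = sum ?t (Pow D') + sum ?t (insert c ` Pow D')"
    unfolding multilinear_ext_def pw using D(3) disj by (simp add: sum.union_disjoint)
  also have "sum ?t (Pow D') = (1 - y c) * multilinear_ext D' h y"
    unfolding multilinear_ext_def sum_distrib_left
  proof (rule sum.cong[OF refl])
    fix S assume S: "S \<in> Pow D'"
    have "D - S = insert c (D' - S)" "c \<notin> D' - S" using S D by auto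
    then have "(\<Prod>e\<in>D - S. 1 - y e) = (1 - y c) * (\<Prod>e\<in>D' - S. 1 - y e)"
      using D(3) by simp
    then show "?t S = (1 - y c) * ((\<Prod>e\<in>S. y e) * (\<Prod>e\<in>D' - S. 1 - y e) * h S)" by simp
  qed
  also have "sum ?t (insert c ` Pow D') = sum (?t \<circ> insert c) (Pow D')"
    using inj by (rule sum.reindex)
  also have "\<dots> = y c * multilinear_ext D' (\<lambda>S. h (insert c S)) y"
    unfolding multilinear_ext_def sum_distrib_left
  proof (rule sum.cong[OF refl])
    fix S assume S: "S \<in> Pow D'"
    have "D - insert c S = D' - S" using S D by auto
    moreover have "(\<Prod>e\<in>insert c S. y e) = y c * (\<Prod>e\<in>S. y e)"
      proof -
      have "finite S" using S D(3) by (meson PowD finite_subset)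
      moreover have "c \<notin> S" using S D(2) by auto
      ultimately show ?thesis by simp
    qed
    ultimately show "(?t \<circ> insert c) S = y c * ((\<Prod>e\<in>S. y e) * (\<Prod>e\<in>D' - S. 1 - y e) * h (insert c S))"
      by simp
  qed
  finally show ?thesis unfolding D'_def by simp
qed

lemma ml_upd:
  assumes "finite D" "c \<in> D"
  shows "multilinear_ext D h (y(c := t)) = t * multilinear_ext (D - {c}) (\<lambda>S. h (insert c S)) y
     + (1 - t) * multilinear_ext (D - {c}) h y"
proof -
  have "multilinear_ext (D - {c}) h' (y(c := t)) = multilinear_ext (D - {c}) h' y" for h'
    by (rule ml_local) auto
  then show ?thesis using ml_rec[OF assms, of h "y(c:=t)"] by simp
qed

lemma ml_affine:
  assumes "finite D" "c \<in> D"
  shows "multilinear_ext D h y = (1 - y c) * multilinear_ext D h (y(c := 0)) + y c * multilinear_ext D h (y(c := 1))"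
  using ml_rec[OF assms, of h y] ml_upd[OF assms, of h y 0] ml_upd[OF assms, of h y 1] by simp

lemma ml_delta:
  assumes "finite D" "c \<in> D"
  shows "multilinear_ext D h (y(c := 1)) - multilinear_ext D h (y(c := 0))
     = multilinear_ext (D - {c}) (\<lambda>S. h (insert c S) - h S) y"
  using ml_upd[OF assms, of h y 0] ml_upd[OF assms, of h y 1] by (simp add: ml_diff)

lemma ml_indicator:
  assumes "finite D" "M \<subseteq> D"
  shows "multilinear_ext D h (\<lambda>e. if e \<in> M then 1 else 0) = h M"
  unfolding multilinear_ext_def
proof -
  have "(\<Sum>S\<in>Pow D. (\<Prod>e\<in>S. if e \<in> M then 1 else 0) * (\<Prod>e\<in>D - S. 1 - (if e \<in> M then 1 else 0)) * h S)
     = (\<Sum>S\<in>Pow D. if S = M then h M else 0)"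
  proof (rule sum.cong[OF refl])
    fix S assume S: "S \<in> Pow D"
    show "(\<Prod>e\<in>S. if e \<in> M then 1 else 0) * (\<Prod>e\<in>D - S. 1 - (if e \<in> M then 1 else 0)) * h S
       = (if S = M then h M else (0::real))"
    proof (cases "S = M")
      case True then show ?thesis by simp
    next
      case False
      then obtain e where "e \<in> S - M \<or> e \<in> M - S" by blast
      then show ?thesis
      proof
        assume "e \<in> S - M"
        then have "(\<Prod>e\<in>S. if e \<in> M then 1 else 0) = (0::real)"
          proof -
          have "finite S" using S assms(1) by (meson PowD finite_subset)
          then show ?thesis using \<open>e \<in> S - M\<close> by (intro prod_zero) auto
        qed
        then show ?thesis using False by simp
      next
        assume "e \<in> M - S"
        then have "(\<Prod>e\<in>D - S. 1 - (if e \<in> M then 1 else 0)) = (0::real)"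
          using assms by (intro prod_zero) auto
        then show ?thesis using False by simp
      qed
    qed
  qed
  also have "\<dots> = h M" using assms by simp
  finally show "(\<Sum>S\<in>Pow D. (\<Prod>e\<in>S. if e \<in> M then 1 else 0) * (\<Prod>e\<in>D - S. 1 - (if e \<in> M then 1 else 0)) * h S) = h M" .
qed

definition box :: "'e set \<Rightarrow> ('e \<Rightarrow> real) \<Rightarrow> bool" where
  "box D y \<longleftrightarrow> (\<forall>e\<in>D. 0 \<le> y e \<and> y e \<le> 1)"

definition mix :: "'e set \<Rightarrow> ('e \<Rightarrow> real) \<Rightarrow> ('e \<Rightarrow> real) \<Rightarrow> 'e \<Rightarrow> real" where
  "mix A y' y = (\<lambda>e. if e \<in> A then y' e else y e)"

lemma mix_box: "box D y \<Longrightarrow> box D y' \<Longrightarrow> box D (mix A y' y)"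
  unfolding box_def mix_def by auto

lemma mix_insert: "mix (insert d A) y' y = (mix A y' y)(d := y' d)"
  unfolding mix_def by auto

lemma mix_notin: "d \<notin> A \<Longrightarrow> mix A y' y d = y d"
  unfolding mix_def by auto

lemma mix_empty: "mix {} y' y = y" unfolding mix_def by auto

lemma ml_mono:
  assumes fin: "finite D" and hm: "\<And>S S'. S \<subseteq> S' \<Longrightarrow> S' \<subseteq> D \<Longrightarrow> h S \<le> h S'"
    and b: "box D y" "box D y'" and le: "\<And>e. e \<in> D \<Longrightarrow> y e \<le> y' e"
  shows "multilinear_ext D h y \<le> multilinear_ext D h y'"
proof -
  have "A \<subseteq> D \<Longrightarrow> multilinear_ext D h y \<le> multilinear_ext D h (mix A y' y)" for A
  proof (induction A rule: infinite_finite_induct)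
    case (infinite A) then show ?case using fin by (meson rev_finite_subset)
  next
    case empty then show ?case by (simp add: mix_empty)
  next
    case (insert d A)
    let ?w = "mix A y' y"
    have d: "d \<in> D" using insert by auto
    let ?P = "multilinear_ext (D - {d}) (\<lambda>S. h (insert d S)) ?w"
    let ?Q = "multilinear_ext (D - {d}) h ?w"
    have "?P - ?Q = multilinear_ext (D - {d}) (\<lambda>S. h (insert d S) - h S) ?w"
      by (simp add: ml_diff)
    also have "\<dots> \<ge> 0"
      using mix_box[OF b(1) b(2), of A] d unfolding box_def
      by (intro ml_nonneg) (auto intro!: hm)
    finally have PQ: "?Q \<le> ?P" by simp
    have "multilinear_ext D h ?w = multilinear_ext D h (?w(d := y d))"
      using mix_notin[OF insert(2)] by (metis fun_upd_triv)
    also have "\<dots> = y d * ?P + (1 - y d) * ?Q" by (rule ml_upd[OF fin d])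
    also have "\<dots> \<le> y' d * ?P + (1 - y' d) * ?Q"
      proof -
        have "0 \<le> (y' d - y d) * (?P - ?Q)" using le[OF d] PQ by simp
        then show ?thesis by (simp add: algebra_simps)
      qed
    also have "\<dots> = multilinear_ext D h (mix (insert d A) y' y)"
      unfolding mix_insert by (rule ml_upd[OF fin d, symmetric])
    finally show ?case using insert by simp
  qed
  from this[of D] have "multilinear_ext D h y \<le> multilinear_ext D h (mix D y' y)" by simp
  also have "\<dots> = multilinear_ext D h y'" by (rule ml_local) (simp add: mix_def)
  finally show ?thesis .
qed

definition pd :: "'e set \<Rightarrow> ('e set \<Rightarrow> real) \<Rightarrow> 'e \<Rightarrow> ('e \<Rightarrow> real) \<Rightarrow> real" where
  "pd E f d y = multilinear_ext E f (y(d := 1)) - multilinear_ext E f (y(d := 0))"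

lemma pd_upd: "pd E f d (y(d := t)) = pd E f d y"
  unfolding pd_def by simp

lemma ml_shift:
  assumes "finite E" "d \<in> E"
  shows "multilinear_ext E f y = multilinear_ext E f (y(d := 0)) + y d * pd E f d y"
  using ml_affine[OF assms, of f y] unfolding pd_def by (simp add: algebra_simps)

lemma pd_nonneg:
  assumes "finite E" "d \<in> E" "monotone_submodular_on E f" "box E y"
  shows "0 \<le> pd E f d y"
proof -
  have mono: "\<And>A B. A \<subseteq> B \<Longrightarrow> B \<subseteq> E \<Longrightarrow> f A \<le> f B"
    using assms(3) unfolding monotone_submodular_on_def by blast
  have "pd E f d y = multilinear_ext (E - {d}) (\<lambda>S. f (insert d S) - f S) y"
    unfolding pd_def by (rule ml_delta[OF assms(1,2)])
  also have "\<dots> \<ge> 0"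
    using assms(2-4) unfolding box_def
    by (intro ml_nonneg) (auto intro!: mono)
  finally show ?thesis .
qed

lemma pd_anti:
  assumes "finite E" "d \<in> E" "monotone_submodular_on E f" "box E y" "box E y'"
    "\<And>e. e \<in> E \<Longrightarrow> y e \<le> y' e"
  shows "pd E f d y' \<le> pd E f d y"
proof -
  have eq: "pd E f d z = multilinear_ext (E - {d}) (\<lambda>S. f (insert d S) - f S) z" for z
    unfolding pd_def by (rule ml_delta[OF assms(1,2)])
  have sub: "\<And>A B. A \<subseteq> E \<Longrightarrow> B \<subseteq> E \<Longrightarrow> f (A \<union> B) + f (A \<inter> B) \<le> f A + f B"
    using assms(3) unfolding monotone_submodular_on_def by blast
  have "multilinear_ext (E - {d}) (\<lambda>S. - (f (insert d S) - f S)) y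
      \<le> multilinear_ext (E - {d}) (\<lambda>S. - (f (insert d S) - f S)) y'"
  proof (rule ml_mono)
    fix S S' assume S: "S \<subseteq> S'" "S' \<subseteq> E - {d}"
    have "f (insert d S \<union> S') + f (insert d S \<inter> S') \<le> f (insert d S) + f S'"
      using S assms(2) by (intro sub) auto
    moreover have "insert d S \<union> S' = insert d S'" "insert d S \<inter> S' = S" using S by auto
    ultimately show "- (f (insert d S) - f S) \<le> - (f (insert d S') - f S')" by simp
  qed (use assms in \<open>auto simp: box_def\<close>)
  then show ?thesis unfolding eq ml_neg by simp
qed

lemma ml_tele:
  assumes fin: "finite E" and ms: "monotone_submodular_on E f" and b: "box E y" "box E y'"
    and le: "\<And>e. e \<in> E \<Longrightarrow> y e \<le> y' e"
  shows "(\<Sum>e\<in>E. (y' e - y e) * pd E f e y') \<le> multilinear_ext E f y' - multilinear_ext E f y"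
    and "multilinear_ext E f y' - multilinear_ext E f y \<le> (\<Sum>e\<in>E. (y' e - y e) * pd E f e y)"
proof -
  have "A \<subseteq> E \<Longrightarrow> (\<Sum>e\<in>A. (y' e - y e) * pd E f e y') \<le> multilinear_ext E f (mix A y' y) - multilinear_ext E f y
       \<and> multilinear_ext E f (mix A y' y) - multilinear_ext E f y \<le> (\<Sum>e\<in>A. (y' e - y e) * pd E f e y)" for A
  proof (induction A rule: infinite_finite_induct)
    case (infinite A) then show ?case using fin by (meson rev_finite_subset)
  next
    case empty then show ?case by (simp add: mix_empty)
  next
    case (insert d A)
    let ?w = "mix A y' y"
    have d: "d \<in> E" using insert by auto
    have bw: "box E ?w" by (rule mix_box[OF b])
    have w1: "\<And>e. e \<in> E \<Longrightarrow> y e \<le> ?w e" "\<And>e. e \<in> E \<Longrightarrow> ?w e \<le> y' e"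
      using le unfolding mix_def by auto
    have p1: "pd E f d y' \<le> pd E f d ?w" by (rule pd_anti[OF fin d ms bw b(2) w1(2)])
    have p2: "pd E f d ?w \<le> pd E f d y" by (rule pd_anti[OF fin d ms b(1) bw w1(1)])
    have a: "multilinear_ext E f (?w(d := y' d)) = multilinear_ext E f (?w(d := 0)) + y' d * pd E f d ?w"
      using ml_shift[OF fin d, of f "?w(d := y' d)"] by (simp add: pd_upd)
    have b: "multilinear_ext E f ?w = multilinear_ext E f (?w(d := 0)) + y d * pd E f d ?w"
      using ml_shift[OF fin d, of f ?w] by (simp add: mix_notin[OF insert(2)])
    have step: "multilinear_ext E f (mix (insert d A) y' y) - multilinear_ext E f ?w = (y' d - y d) * pd E f d ?w"
      unfolding mix_insert a b by (simp add: left_diff_distrib)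
    have nn: "0 \<le> y' d - y d" using le[OF d] by simp
    have "(y' d - y d) * pd E f d y' \<le> (y' d - y d) * pd E f d ?w"
      "(y' d - y d) * pd E f d ?w \<le> (y' d - y d) * pd E f d y"
      using p1 p2 nn by (auto intro: mult_left_mono)
    then show ?case using insert step by (simp add: sum.insert)
  qed
  from this[of E] have "(\<Sum>e\<in>E. (y' e - y e) * pd E f e y') \<le> multilinear_ext E f (mix E y' y) - multilinear_ext E f y
       \<and> multilinear_ext E f (mix E y' y) - multilinear_ext E f y \<le> (\<Sum>e\<in>E. (y' e - y e) * pd E f e y)" by simp
  moreover have "multilinear_ext E f (mix E y' y) = multilinear_ext E f y'" by (rule ml_local) (simp add: mix_def)
  ultimately show "(\<Sum>e\<in>E. (y' e - y e) * pd E f e y') \<le> multilinear_ext E f y' - multilinear_ext E f y"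
    and "multilinear_ext E f y' - multilinear_ext E f y \<le> (\<Sum>e\<in>E. (y' e - y e) * pd E f e y)" by auto
qed

definition zv :: "('a \<times> 'b \<Rightarrow> real) \<Rightarrow> ('a \<times> 'b) set \<Rightarrow> real \<Rightarrow> 'a \<times> 'b \<Rightarrow> real" where
  "zv x M g = (\<lambda>e. if e \<in> M then 1 else if fst e \<in> fst ` M then 0 else g * x e)"

lemma step_ineq:
  fixes E :: "('a \<times> 'b) set"
  assumes fin: "finite E" and ms: "monotone_submodular_on E f" and xb: "box E x"
    and xu: "\<And>e. e \<in> E \<Longrightarrow> (\<Sum>e'\<in>{e'\<in>E. fst e' = fst e}. x e') \<le> 1"
    and g: "0 \<le> g" "g \<le> 1" and q: "0 \<le> q" "q \<le> 1"
    and E'_def: "E' = {e\<in>E. fst e \<notin> fst ` M}"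
  shows "multilinear_ext E f (zv x M (g + q * (1 - g)))
    \<le> (1 - (\<Sum>e\<in>E'. q * x e)) * multilinear_ext E f (zv x M g)
       + (\<Sum>e\<in>E'. q * x e * multilinear_ext E f (zv x (insert e M) g))"
proof -
  let ?F = "multilinear_ext E f"
  define z' where "z' = zv x M g"
  define z where "z = zv x M (g + q * (1 - g))"
  define a where "a = (\<lambda>u e'. if fst e' = u then 0 else z' e')"
  define D where "D = (\<lambda>e. pd E f e (a (fst e)))"
  define Sg where "Sg = (\<lambda>u. \<Sum>e'\<in>{e'\<in>E. fst e' = u}. x e' * D e')"
  have finE': "finite E'" using fin E'_def by simp
  have E'E: "E' \<subseteq> E" using E'_def by auto
  have g2: "g \<le> g + q * (1 - g)" "g + q * (1 - g) \<le> 1"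
  proof -
    have "0 \<le> q * (1 - g)" "0 \<le> (1 - g) * (1 - q)" using g q by simp_all
    then show "g \<le> g + q * (1 - g)" "g + q * (1 - g) \<le> 1" by (simp_all add: algebra_simps)
  qed
  have gx: "0 \<le> c * x e \<and> c * x e \<le> 1" if "e \<in> E" "0 \<le> c" "c \<le> 1" for c e
    using xb that unfolding box_def by (auto intro: mult_le_one)
  have bz': "box E z'" unfolding box_def z'_def zv_def using gx g by auto
  have bz: "box E z" unfolding box_def z_def zv_def using gx g g2 by auto
  have ba: "box E (a u)" for u using bz' unfolding box_def a_def by auto
  have le1: "z' e \<le> z e" if "e \<in> E" for e
    using that g2 xb unfolding z'_def z_def zv_def box_def by (auto intro: mult_right_mono)
  have le2: "a u e \<le> z' e" if "e \<in> E" for u e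
    using that bz' unfolding a_def box_def by auto
  have Dnn: "0 \<le> D e" if "e \<in> E" for e
    unfolding D_def using pd_nonneg[OF fin that ms ba] .
  have xnn: "0 \<le> x e" if "e \<in> E" for e using xb that unfolding box_def by auto
  have ins: "?F (zv x (insert e M) g) = ?F (a (fst e)) + D e" if e: "e \<in> E'" for e
  proof -
    have "?F (zv x (insert e M) g) = ?F ((a (fst e))(e := 1))"
      by (rule ml_local) (use e in \<open>auto simp: zv_def a_def z'_def E'_def image_iff; force\<close>)
    moreover have "(a (fst e))(e := 0) = a (fst e)" by (auto simp: a_def fun_eq_iff)
    ultimately show ?thesis unfolding D_def pd_def by simp
  qed
  have i: "?F z - ?F z' \<le> (\<Sum>e\<in>E'. q * (1 - g) * (x e * D e))"
  proof -
    have "?F z - ?F z' \<le> (\<Sum>e\<in>E. (z e - z' e) * pd E f e z')"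
      by (rule ml_tele(2)[OF fin ms bz' bz le1])
    also have "\<dots> \<le> (\<Sum>e\<in>E. if e \<in> E' then q * (1 - g) * (x e * D e) else 0)"
    proof (rule sum_mono)
      fix e assume e: "e \<in> E"
      show "(z e - z' e) * pd E f e z' \<le> (if e \<in> E' then q * (1 - g) * (x e * D e) else 0)"
      proof (cases "e \<in> E'")
        case True
        then have "e \<notin> M" "fst e \<notin> fst ` M" using E'_def by auto
        then have zz: "z e - z' e = q * (1 - g) * x e" unfolding z_def z'_def zv_def by (simp add: algebra_simps)
        have "pd E f e z' \<le> D e" unfolding D_def
          by (rule pd_anti[OF fin e ms ba bz' le2])
        moreover have "0 \<le> q * (1 - g) * x e" using q g xnn[OF e] by simp
        ultimately have "q * (1 - g) * x e * pd E f e z' \<le> q * (1 - g) * x e * D e"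
          by (simp add: mult_left_mono)
        then show ?thesis using True zz by (simp add: mult.assoc)
      next
        case False
        then have "fst e \<in> fst ` M" using e E'_def by auto
        then have "z e = z' e" unfolding z_def z'_def zv_def by simp
        then show ?thesis using False by simp
      qed
    qed
    also have "\<dots> = (\<Sum>e\<in>E'. q * (1 - g) * (x e * D e))"
      using fin unfolding E'_def by (simp add: sum.inter_filter)
    finally show ?thesis .
  qed
  have iii: "?F z' - ?F (a (fst e)) \<le> g * Sg (fst e)" if e: "e \<in> E'" for e
  proof -
    have "?F z' - ?F (a (fst e)) \<le> (\<Sum>e'\<in>E. (z' e' - a (fst e) e') * pd E f e' (a (fst e)))"
      by (rule ml_tele(2)[OF fin ms ba bz' le2])
    also have "\<dots> = (\<Sum>e'\<in>E. if fst e' = fst e then g * (x e' * D e') else 0)"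
    proof (rule sum.cong[OF refl])
      fix e' assume e': "e' \<in> E"
      show "(z' e' - a (fst e) e') * pd E f e' (a (fst e)) = (if fst e' = fst e then g * (x e' * D e') else 0)"
      proof (cases "fst e' = fst e")
        case True
        then have "e' \<notin> M" "fst e' \<notin> fst ` M" using e E'_def by (auto, metis imageI)
        then show ?thesis using True unfolding a_def z'_def zv_def D_def by simp
      next
        case False then show ?thesis unfolding a_def by simp
      qed
    qed
    also have "\<dots> = g * Sg (fst e)"
      unfolding Sg_def sum_distrib_left using fin by (simp add: sum.inter_filter)
    finally show ?thesis .
  qed
  have G: "{e'\<in>E. fst e' = fst e} = {e'\<in>E'. fst e' = fst e}" if "e \<in> E'" for e
    using that E'_def by auto (metis fst_conv imageI)
  have swap: "(\<Sum>e\<in>E'. x e * Sg (fst e)) \<le> (\<Sum>e\<in>E'. x e * D e)"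
  proof -
    have "(\<Sum>e\<in>E'. x e * Sg (fst e)) = (\<Sum>e\<in>E'. \<Sum>e'\<in>E'. if fst e' = fst e then x e * (x e' * D e') else 0)"
    proof (rule sum.cong[OF refl])
      fix e assume e: "e \<in> E'"
      show "x e * Sg (fst e) = (\<Sum>e'\<in>E'. if fst e' = fst e then x e * (x e' * D e') else 0)"
        unfolding Sg_def G[OF e] sum_distrib_left using finE' by (simp add: sum.inter_filter)
    qed
    also have "\<dots> = (\<Sum>e'\<in>E'. \<Sum>e\<in>E'. if fst e' = fst e then x e * (x e' * D e') else 0)"
      by (rule sum.swap)
    also have "\<dots> = (\<Sum>e'\<in>E'. (x e' * D e') * (\<Sum>e\<in>{e\<in>E. fst e = fst e'}. x e))"
    proof (rule sum.cong[OF refl])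
      fix e' assume e': "e' \<in> E'"
      have "{e\<in>E. fst e = fst e'} = {e\<in>E'. fst e = fst e'}" using e' E'_def by auto (metis fst_conv imageI)
      then show "(\<Sum>e\<in>E'. if fst e' = fst e then x e * (x e' * D e') else 0) = (x e' * D e') * (\<Sum>e\<in>{e\<in>E. fst e = fst e'}. x e)"
        unfolding sum_distrib_left using finE' by (simp add: sum.inter_filter eq_commute[of "fst e'"], intro sum.cong, simp_all add: mult_ac)
    qed
    also have "\<dots> \<le> (\<Sum>e'\<in>E'. (x e' * D e') * 1)"
    proof (rule sum_mono)
      fix e' assume e': "e' \<in> E'"
      then have "e' \<in> E" using E'E by auto
      then have "0 \<le> x e' * D e'" using xnn Dnn by simp
      moreover have "(\<Sum>e\<in>{e\<in>E. fst e = fst e'}. x e) \<le> 1" using xu[OF \<open>e' \<in> E\<close>] by simp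
      ultimately show "(x e' * D e') * (\<Sum>e\<in>{e\<in>E. fst e = fst e'}. x e) \<le> (x e' * D e') * 1"
        by (metis mult_left_mono)
    qed
    finally show ?thesis by simp
  qed
  define s where "s = (\<Sum>e\<in>E'. q * x e)"
  define A where "A = (\<Sum>e\<in>E'. x e * D e)"
  define B where "B = (\<Sum>e\<in>E'. x e * Sg (fst e))"
  have h1: "(\<Sum>e\<in>E'. q * x e * ?F (zv x (insert e M) g))
      \<ge> (\<Sum>e\<in>E'. q * x e * ?F z' - q * g * (x e * Sg (fst e)) + q * (x e * D e))"
  proof (rule sum_mono)
    fix e assume e: "e \<in> E'"
    have "0 \<le> q * x e" using q xnn[of e] E'E e by auto
    then have "q * x e * (?F z' - g * Sg (fst e)) \<le> q * x e * ?F (a (fst e))"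
      using iii[OF e] by (intro mult_left_mono) auto
    then show "q * x e * ?F z' - q * g * (x e * Sg (fst e)) + q * (x e * D e) \<le> q * x e * ?F (zv x (insert e M) g)"
      unfolding ins[OF e] by (simp add: algebra_simps)
  qed
  have h2: "(\<Sum>e\<in>E'. q * x e * ?F z' - q * g * (x e * Sg (fst e)) + q * (x e * D e))
      = s * ?F z' - q * g * B + q * A"
    unfolding s_def A_def B_def by (simp add: sum.distrib sum_subtractf sum_distrib_left sum_distrib_right)
  have i': "?F z - ?F z' \<le> q * (1 - g) * A" using i unfolding A_def by (simp add: sum_distrib_left)
  have sw: "q * g * B \<le> q * g * A" using swap q g unfolding A_def B_def by (intro mult_left_mono) auto
  have "?F z \<le> (1 - s) * ?F z' + (s * ?F z' - q * g * B + q * A)"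
    using i' sw by (simp add: algebra_simps)
  also have "\<dots> \<le> (1 - s) * ?F z' + (\<Sum>e\<in>E'. q * x e * ?F (zv x (insert e M) g))"
    using h1 h2 by simp
  finally show ?thesis unfolding z_def z'_def s_def .
qed

lemma pmf_embed_finite:
  assumes "finite A" "\<And>a. 0 \<le> g a" "\<And>a. a \<notin> A \<Longrightarrow> g a = 0" "sum g A = 1"
  shows "pmf (embed_pmf g) a = g a"
proof (rule pmf_embed_pmf)
  show "0 \<le> g a" for a by (rule assms(2))
  have "(\<integral>\<^sup>+a. ennreal (g a) \<partial>count_space UNIV) = (\<Sum>a\<in>A. ennreal (g a))"
    using assms by (intro nn_integral_count_space') auto
  also have "\<dots> = ennreal (sum g A)" using assms(2) by simp
  finally show "(\<integral>\<^sup>+a. ennreal (g a) \<partial>count_space UNIV) = 1" using assms(4) by simp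
qed

lemma exp_finite:
  fixes h :: "'a \<Rightarrow> real"
  assumes "finite A" "\<And>a. a \<notin> A \<Longrightarrow> pmf P a = 0"
  shows "measure_pmf.expectation P h = (\<Sum>a\<in>A. h a * pmf P a)"
  using assms by (intro integral_measure_pmf_real) (auto simp: set_pmf_iff)

lemma pmf_arrival:
  assumes "finite V" "\<forall>v\<in>V. 0 \<le> p v" "(\<Sum>v\<in>V. p v) \<le> 1"
  shows "pmf (arrival_pmf V p) a = (case a of None \<Rightarrow> 1 - (\<Sum>v\<in>V. p v) | Some v \<Rightarrow> (if v \<in> V then p v else 0))"
  unfolding arrival_pmf_def
proof (rule pmf_embed_finite[where A = "insert None (Some ` V)"])
  show "finite (insert None (Some ` V))" using assms by simp
  show "0 \<le> (case a of None \<Rightarrow> 1 - (\<Sum>v\<in>V. p v) | Some v \<Rightarrow> (if v \<in> V then p v else 0))" for a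
    using assms by (cases a) auto
  show "(case a of None \<Rightarrow> 1 - (\<Sum>v\<in>V. p v) | Some v \<Rightarrow> (if v \<in> V then p v else 0)) = 0"
    if "a \<notin> insert None (Some ` V)" for a using that by (cases a) auto
  have "inj_on Some V" by simp
  then show "(\<Sum>a\<in>insert None (Some ` V). (case a of None \<Rightarrow> 1 - (\<Sum>v\<in>V. p v) | Some v \<Rightarrow> (if v \<in> V then p v else 0))) = 1"
    using assms by (simp add: sum.reindex)
qed

lemma pmf_edge:
  assumes "finite E" "\<forall>e\<in>E. 0 \<le> x e" "0 \<le> rv" "(\<Sum>e\<in>edges_at_v E v. x e) \<le> rv"
  shows "pmf (edge_pmf E x rv v) a = (case a of None \<Rightarrow> 1 - (\<Sum>e\<in>edges_at_v E v. x e / rv)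
      | Some e \<Rightarrow> (if e \<in> edges_at_v E v then x e / rv else 0))"
  unfolding edge_pmf_def
proof (rule pmf_embed_finite[where A = "insert None (Some ` edges_at_v E v)"])
  have fin: "finite (edges_at_v E v)" using assms(1) unfolding edges_at_v_def by simp
  then show "finite (insert None (Some ` edges_at_v E v))" by simp
  have s: "(\<Sum>e\<in>edges_at_v E v. x e / rv) \<le> 1"
  proof (cases "rv = 0")
    case True then show ?thesis by simp
  next
    case False
    then have "(\<Sum>e\<in>edges_at_v E v. x e / rv) = (\<Sum>e\<in>edges_at_v E v. x e) / rv"
      by (simp add: sum_divide_distrib)
    also have "\<dots> \<le> 1" using assms(3,4) False by simp
    finally show ?thesis .
  qed
  have en: "e \<in> edges_at_v E v \<Longrightarrow> 0 \<le> x e" for e using assms(2) unfolding edges_at_v_def by auto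
  show "0 \<le> (case a of None \<Rightarrow> 1 - (\<Sum>e\<in>edges_at_v E v. x e / rv)
      | Some e \<Rightarrow> (if e \<in> edges_at_v E v then x e / rv else 0))" for a
    using s en assms(3) by (cases a) auto
  show "(case a of None \<Rightarrow> 1 - (\<Sum>e\<in>edges_at_v E v. x e / rv)
      | Some e \<Rightarrow> (if e \<in> edges_at_v E v then x e / rv else 0)) = 0"
    if "a \<notin> insert None (Some ` edges_at_v E v)" for a using that by (cases a) auto
  have "inj_on Some (edges_at_v E v)" by simp
  then show "(\<Sum>a\<in>insert None (Some ` edges_at_v E v). (case a of None \<Rightarrow> 1 - (\<Sum>e\<in>edges_at_v E v. x e / rv)
      | Some e \<Rightarrow> (if e \<in> edges_at_v E v then x e / rv else 0))) = 1"
    using fin by (simp add: sum.reindex)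
qed

lemma inst_facts:
  assumes "mmp_instance T U V E p x f"
  shows "T \<ge> 1" "finite U" "finite V" "E \<subseteq> U \<times> V" "finite E" "\<forall>v\<in>V. 0 \<le> p v" "(\<Sum>v\<in>V. p v) \<le> 1"
    "monotone_submodular_on E f" "box E x"
    "\<forall>v\<in>V. (\<Sum>e\<in>edges_at_v E v. x e) \<le> real T * p v"
    "\<forall>u\<in>U. (\<Sum>e\<in>edges_at_u E u. x e) \<le> 1"
  using assms unfolding mmp_instance_def box_def by (auto intro: finite_subset)

lemma pmf_round:
  assumes inst: "mmp_instance T U V E p x f"
  shows "pmf (round_pmf T V E p x) (Some e) = (if e \<in> E then (1 / real T) * x e else 0)"
proof -
  note I = inst_facts[OF inst]
  have xnn: "\<forall>e\<in>E. 0 \<le> x e" using I(9) unfolding box_def by auto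
  let ?G = "\<lambda>a. pmf (case a of None \<Rightarrow> return_pmf None | Some v \<Rightarrow> edge_pmf E x (real T * p v) v) (Some e)"
  have "pmf (round_pmf T V E p x) (Some e) = measure_pmf.expectation (arrival_pmf V p) ?G"
    unfolding round_pmf_def pmf_bind by simp
  also have "\<dots> = (\<Sum>a\<in>insert None (Some ` V). ?G a * pmf (arrival_pmf V p) a)"
    by (rule exp_finite) (use I in \<open>auto simp: pmf_arrival split: option.splits\<close>)
  also have "\<dots> = (\<Sum>v\<in>V. ?G (Some v) * p v)"
    using I by (simp add: sum.reindex pmf_arrival)
  also have "\<dots> = (\<Sum>v\<in>V. (if e \<in> edges_at_v E v then x e / (real T * p v) else 0) * p v)"
  proof (rule sum.cong[OF refl])
    fix v assume v: "v \<in> V"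
    have "pmf (edge_pmf E x (real T * p v) v) (Some e) = (if e \<in> edges_at_v E v then x e / (real T * p v) else 0)"
      using I v xnn by (subst pmf_edge) auto
    then show "?G (Some v) * p v = (if e \<in> edges_at_v E v then x e / (real T * p v) else 0) * p v" by simp
  qed
  also have "\<dots> = (if e \<in> E then (1 / real T) * x e else 0)"
  proof (cases "e \<in> E")
    case True
    then have sv: "snd e \<in> V" using I(4) by auto
    have "(\<Sum>v\<in>V. (if e \<in> edges_at_v E v then x e / (real T * p v) else 0) * p v)
        = (\<Sum>v\<in>V. if v = snd e then x e / (real T * p (snd e)) * p (snd e) else 0)"
      by (rule sum.cong) (use True in \<open>auto simp: edges_at_v_def\<close>)
    also have "\<dots> = x e / (real T * p (snd e)) * p (snd e)" using sv I(3) by simp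
    also have "\<dots> = (1 / real T) * x e"
    proof (cases "p (snd e) = 0")
      case True
      have "x e \<le> (\<Sum>e\<in>edges_at_v E (snd e). x e)"
        using \<open>e \<in> E\<close> xnn I(5) by (intro member_le_sum) (auto simp: edges_at_v_def)
      also have "\<dots> \<le> 0" using I(10) sv True by auto
      finally have "x e = 0" using xnn \<open>e \<in> E\<close> by auto
      then show ?thesis using True by simp
    next
      case False then show ?thesis using I(1) by (simp add: field_simps)
    qed
    finally show ?thesis using True by simp
  next
    case False then show ?thesis by (auto simp: edges_at_v_def)
  qed
  finally show ?thesis .
qed

lemma exp_round:
  fixes h :: "('u \<times> 'v) option \<Rightarrow> real"
  assumes inst: "mmp_instance T U V E p x f"
  shows "measure_pmf.expectation (round_pmf T V E p x) h
     = (1 - (\<Sum>e\<in>E. (1 / real T) * x e)) * h None + (\<Sum>e\<in>E. (1 / real T) * x e * h (Some e))"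
    and "(\<Sum>e\<in>E. (1 / real T) * x e) \<le> 1"
    and "set_pmf (round_pmf T V E p x) \<subseteq> insert None (Some ` E)"
proof -
  note I = inst_facts[OF inst]
  let ?R = "round_pmf T V E p x"
  let ?A = "insert None (Some ` E)"
  have out: "pmf ?R a = 0" if "a \<notin> ?A" for a
    using that pmf_round[OF inst] by (cases a) auto
  have sub: "set_pmf ?R \<subseteq> ?A" by (metis out set_pmf_iff subsetI)
  then show "set_pmf ?R \<subseteq> ?A" .
  have inj: "inj_on Some E" by simp
  have "(\<Sum>a\<in>?A. pmf ?R a) = 1" by (rule sum_pmf_eq_1) (use sub I in auto)
  then have pn: "pmf ?R None = 1 - (\<Sum>e\<in>E. (1 / real T) * x e)"
    using I(5) inj by (simp add: sum.reindex pmf_round[OF inst])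
  then show "(\<Sum>e\<in>E. (1 / real T) * x e) \<le> 1" using pmf_nonneg[of ?R None] by simp
  have "measure_pmf.expectation ?R h = (\<Sum>a\<in>?A. h a * pmf ?R a)"
    by (rule exp_finite) (use I in \<open>auto intro: out\<close>)
  also have "\<dots> = h None * pmf ?R None + (\<Sum>e\<in>E. h (Some e) * ((1 / real T) * x e))"
    using I(5) inj by (simp add: sum.reindex pmf_round[OF inst])
  finally show "measure_pmf.expectation ?R h
     = (1 - (\<Sum>e\<in>E. (1 / real T) * x e)) * h None + (\<Sum>e\<in>E. (1 / real T) * x e * h (Some e))"
    unfolding pn by (simp add: mult_ac)
qed

lemma ml_scale:
  assumes fin: "finite E" and ms: "monotone_submodular_on E f" and xb: "box E x"
    and c: "0 \<le> c" "c \<le> 1"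
  shows "c * multilinear_ext E f x \<le> multilinear_ext E f (\<lambda>e. c * x e)"
proof -
  let ?F = "multilinear_ext E f"
  let ?y = "\<lambda>e. c * x e"
  have xnn: "\<And>e. e \<in> E \<Longrightarrow> 0 \<le> x e \<and> x e \<le> 1" using xb unfolding box_def by auto
  have yb: "box E ?y" unfolding box_def using xnn c by (auto intro: mult_le_one)
  have b0: "box E (\<lambda>e. 0)" unfolding box_def by auto
  define P where "P = (\<Sum>e\<in>E. x e * pd E f e ?y)"
  have "?F x - ?F ?y \<le> (\<Sum>e\<in>E. (x e - c * x e) * pd E f e ?y)"
    by (rule ml_tele(2)[OF fin ms yb xb]) (use xnn c in \<open>auto intro: mult_left_le_one_le\<close>)
  also have "\<dots> = (1 - c) * P" unfolding P_def sum_distrib_left by (rule sum.cong) (auto simp: algebra_simps)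
  finally have A: "?F x - ?F ?y \<le> (1 - c) * P" .
  have "(\<Sum>e\<in>E. (c * x e - 0) * pd E f e ?y) \<le> ?F ?y - ?F (\<lambda>e. 0)"
    by (rule ml_tele(1)[OF fin ms b0 yb]) (use xnn c in auto)
  moreover have "(\<Sum>e\<in>E. (c * x e - 0) * pd E f e ?y) = c * P"
    unfolding P_def sum_distrib_left by (rule sum.cong) (auto simp: algebra_simps)
  ultimately have B: "c * P \<le> ?F ?y - ?F (\<lambda>e. 0)" by simp
  have F0: "0 \<le> ?F (\<lambda>e. 0)"
    using ms unfolding monotone_submodular_on_def by (intro ml_nonneg) auto
  have "c * (?F x - ?F ?y) \<le> c * ((1 - c) * P)" using A c by (intro mult_left_mono) auto
  also have "\<dots> = (1 - c) * (c * P)" by simp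
  also have "\<dots> \<le> (1 - c) * (?F ?y - ?F (\<lambda>e. 0))" using B c by (intro mult_left_mono) auto
  finally have "c * ?F x \<le> c * ?F ?y + (1 - c) * ?F ?y - (1 - c) * ?F (\<lambda>e. 0)"
    by (simp add: algebra_simps)
  moreover have "0 \<le> (1 - c) * ?F (\<lambda>e. 0)" using F0 c by simp
  ultimately show ?thesis by (simp add: algebra_simps)
qed

definition Kr :: "('a \<times> 'b) option pmf \<Rightarrow> ('a \<times> 'b) set \<Rightarrow> ('a \<times> 'b) set pmf" where
  "Kr R M = map_pmf (mmp_step M) R"

primrec fwd :: "('a \<times> 'b) option pmf \<Rightarrow> nat \<Rightarrow> ('a \<times> 'b) set \<Rightarrow> ('a \<times> 'b) set pmf" where
  "fwd R 0 M = return_pmf M"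
| "fwd R (Suc k) M = bind_pmf (fwd R k M) (Kr R)"

lemma mmp_run_fwd: "mmp_run t T V E p x = fwd (round_pmf T V E p x) t {}"
proof -
  have "Kr R = (\<lambda>M. map_pmf (mmp_step M) R)" for R :: "('a \<times> 'b) option pmf" by (rule ext) (simp add: Kr_def)
  then show ?thesis by (induction t) simp_all
qed

lemma fwd_Suc': "fwd R (Suc k) M = bind_pmf (Kr R M) (fwd R k)"
proof (induction k arbitrary: M)
  case 0 then show ?case by (simp add: bind_return_pmf bind_return_pmf')
next
  case (Suc k)
  have "fwd R (Suc (Suc k)) M = bind_pmf (bind_pmf (Kr R M) (fwd R k)) (Kr R)"
    using Suc by simp
  also have "\<dots> = bind_pmf (Kr R M) (fwd R (Suc k))"
  proof -
    have "fwd R (Suc k) = (\<lambda>N. bind_pmf (fwd R k N) (Kr R))" by (rule ext) simp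
    then show ?thesis by (simp add: bind_assoc_pmf)
  qed
  finally show ?case .
qed

lemma mmp_step_sub: "a \<in> insert None (Some ` E) \<Longrightarrow> mmp_step N a \<subseteq> N \<union> E"
  unfolding mmp_step_def by (auto split: option.splits)

lemma mmp_step_Some: "mmp_step M (Some e) = (if fst e \<notin> fst ` M then insert e M else M)"
  unfolding mmp_step_def by (cases e) auto

lemma fwd_support:
  assumes "set_pmf R \<subseteq> insert None (Some ` E)"
  shows "N \<in> set_pmf (fwd R k M) \<Longrightarrow> N \<subseteq> M \<union> E"
proof (induction k arbitrary: N)
  case 0 then show ?case by simp
next
  case (Suc k)
  then obtain N' a where "N' \<in> set_pmf (fwd R k M)" "a \<in> set_pmf R" "N = mmp_step N' a"
    by (auto simp: Kr_def)
  then show ?case using Suc.IH mmp_step_sub[of a E N'] assms by blast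
qed

lemma fwd_finite:
  assumes "set_pmf R \<subseteq> insert None (Some ` E)" "finite E" "finite M"
  shows "finite (set_pmf (fwd R k M))"
proof -
  have "set_pmf (fwd R k M) \<subseteq> Pow (M \<union> E)" using fwd_support[OF assms(1)] by blast
  then show ?thesis using assms(2,3) by (meson finite_Pow_iff finite_UnI finite_subset)
qed

lemma exp_fwd_Suc:
  fixes h :: "('a \<times> 'b) set \<Rightarrow> real"
  assumes sub: "set_pmf R \<subseteq> insert None (Some ` E)" and fin: "finite E" "finite M"
  shows "measure_pmf.expectation (fwd R (Suc k) M) h
     = measure_pmf.expectation R (\<lambda>a. measure_pmf.expectation (fwd R k (mmp_step M a)) h)"
proof -
  let ?A = "mmp_step M ` insert None (Some ` E)"
  let ?\<Phi> = "\<lambda>N. measure_pmf.expectation (fwd R k N) h"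
  have finA: "finite ?A" using fin by simp
  have subA: "set_pmf (Kr R M) \<subseteq> ?A" using sub unfolding Kr_def by auto
  have finN: "finite (set_pmf (fwd R k N))" if "N \<in> ?A" for N
  proof -
    have "N \<subseteq> M \<union> E" using that mmp_step_sub by blast
    then have "finite N" using fin by (meson finite_UnI finite_subset)
    then show ?thesis by (rule fwd_finite[OF sub fin(1)])
  qed
  have "measure_pmf.expectation (fwd R (Suc k) M) h = (\<Sum>N\<in>?A. pmf (Kr R M) N *\<^sub>R ?\<Phi> N)"
    unfolding fwd_Suc' by (rule pmf_expectation_bind[OF finA finN subA])
  also have "\<dots> = measure_pmf.expectation (Kr R M) ?\<Phi>"
    by (subst exp_finite[OF finA]) (use subA in \<open>auto simp: set_pmf_iff mult_ac\<close>)
  also have "\<dots> = measure_pmf.expectation R (\<lambda>a. ?\<Phi> (mmp_step M a))"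
    unfolding Kr_def by simp
  finally show ?thesis .
qed

lemma main_ind:
  fixes E :: "('u \<times> 'v) set"
  assumes inst: "mmp_instance T U V E p x f"
  shows "M \<subseteq> E \<Longrightarrow> multilinear_ext E f (zv x M (1 - (1 - 1 / real T) ^ k))
     \<le> measure_pmf.expectation (fwd (round_pmf T V E p x) k M) f"
proof (induction k arbitrary: M)
  note I = inst_facts[OF inst]
  case 0
  have "multilinear_ext E f (zv x M (1 - (1 - 1 / real T) ^ 0)) = multilinear_ext E f (\<lambda>e. if e \<in> M then 1 else 0)"
    by (rule ml_local) (simp add: zv_def)
  also have "\<dots> = f M" by (rule ml_indicator[OF I(5) 0])
  finally show ?case by simp
next
  note I = inst_facts[OF inst]
  case (Suc k)
  let ?R = "round_pmf T V E p x"
  let ?F = "multilinear_ext E f"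
  let ?\<Phi> = "\<lambda>N. measure_pmf.expectation (fwd ?R k N) f"
  define q where "q = 1 / real T"
  define g where "g = 1 - (1 - 1 / real T) ^ k"
  define E' where "E' = {e\<in>E. fst e \<notin> fst ` M}"
  have T1: "1 \<le> real T" using I(1) by simp
  have q: "0 \<le> q" "q \<le> 1" using T1 unfolding q_def by auto
  have pw: "0 \<le> (1 - 1 / real T) ^ k" "(1 - 1 / real T) ^ k \<le> 1" using T1 by (auto intro: power_le_one)
  have g: "0 \<le> g" "g \<le> 1" using pw unfolding g_def by auto
  have gs: "g + q * (1 - g) = 1 - (1 - 1 / real T) ^ Suc k"
    unfolding g_def q_def by (simp add: algebra_simps)
  have finM: "finite M" using Suc.prems I(5) by (rule finite_subset)
  have E'E: "E' \<subseteq> E" unfolding E'_def by auto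
  have xnn: "0 \<le> x e" if "e \<in> E" for e using I(9) that unfolding box_def by auto
  have xu: "(\<Sum>e'\<in>{e'\<in>E. fst e' = fst e}. x e') \<le> 1" if "e \<in> E" for e
  proof -
    have "fst e \<in> U" using that I(4) by auto
    then show ?thesis using I(11) unfolding edges_at_u_def by auto
  qed
  have hR: "measure_pmf.expectation ?R (\<lambda>a. ?\<Phi> (mmp_step M a))
     = (1 - (\<Sum>e\<in>E. q * x e)) * ?\<Phi> (mmp_step M None) + (\<Sum>e\<in>E. q * x e * ?\<Phi> (mmp_step M (Some e)))"
    using exp_round(1)[OF inst, where h = "\<lambda>a. ?\<Phi> (mmp_step M a)"] unfolding q_def .
  have sall: "(\<Sum>e\<in>E. q * x e) \<le> 1" using exp_round(2)[OF inst] unfolding q_def .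
  have subR: "set_pmf ?R \<subseteq> insert None (Some ` E)" using exp_round(3)[OF inst] .
  have split1: "(\<Sum>e\<in>E. q * x e) = (\<Sum>e\<in>E - E'. q * x e) + (\<Sum>e\<in>E'. q * x e)"
    using sum.subset_diff[OF E'E I(5)] .
  have split2: "(\<Sum>e\<in>E. q * x e * ?\<Phi> (mmp_step M (Some e)))
      = (\<Sum>e\<in>E - E'. q * x e * ?\<Phi> (mmp_step M (Some e))) + (\<Sum>e\<in>E'. q * x e * ?\<Phi> (mmp_step M (Some e)))"
    using sum.subset_diff[OF E'E I(5)] .
  have p1: "(\<Sum>e\<in>E - E'. q * x e * ?\<Phi> (mmp_step M (Some e))) = (\<Sum>e\<in>E - E'. q * x e) * ?\<Phi> M"
    unfolding sum_distrib_right by (rule sum.cong) (auto simp: mmp_step_Some E'_def)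
  have p2: "(\<Sum>e\<in>E'. q * x e * ?\<Phi> (mmp_step M (Some e))) = (\<Sum>e\<in>E'. q * x e * ?\<Phi> (insert e M))"
    by (rule sum.cong) (auto simp: mmp_step_Some E'_def)
  have nn: "0 \<le> (\<Sum>e\<in>E - E'. q * x e)" using q xnn by (intro sum_nonneg) auto
  have s1: "0 \<le> 1 - (\<Sum>e\<in>E'. q * x e)" using sall split1 nn by linarith
  have "measure_pmf.expectation (fwd ?R (Suc k) M) f = measure_pmf.expectation ?R (\<lambda>a. ?\<Phi> (mmp_step M a))"
    by (rule exp_fwd_Suc[OF subR I(5) finM])
  also have "\<dots> = (1 - (\<Sum>e\<in>E'. q * x e)) * ?\<Phi> M + (\<Sum>e\<in>E'. q * x e * ?\<Phi> (insert e M))"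
    unfolding hR split2 p1 p2 using split1 by (simp add: mmp_step_def algebra_simps)
  also have "\<dots> \<ge> (1 - (\<Sum>e\<in>E'. q * x e)) * ?F (zv x M g) + (\<Sum>e\<in>E'. q * x e * ?F (zv x (insert e M) g))"
  proof (rule add_mono)
    show "(1 - (\<Sum>e\<in>E'. q * x e)) * ?F (zv x M g) \<le> (1 - (\<Sum>e\<in>E'. q * x e)) * ?\<Phi> M"
      using Suc.IH[OF Suc.prems] s1 unfolding g_def by (intro mult_left_mono) auto
    show "(\<Sum>e\<in>E'. q * x e * ?F (zv x (insert e M) g)) \<le> (\<Sum>e\<in>E'. q * x e * ?\<Phi> (insert e M))"
    proof (rule sum_mono)
      fix e assume e: "e \<in> E'"
      then have "insert e M \<subseteq> E" using E'E Suc.prems by auto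
      from Suc.IH[OF this] have "?F (zv x (insert e M) g) \<le> ?\<Phi> (insert e M)" unfolding g_def .
      moreover have "0 \<le> q * x e" using q xnn[of e] e E'E by auto
      ultimately show "q * x e * ?F (zv x (insert e M) g) \<le> q * x e * ?\<Phi> (insert e M)"
        by (intro mult_left_mono) auto
    qed
  qed
  also have "(1 - (\<Sum>e\<in>E'. q * x e)) * ?F (zv x M g) + (\<Sum>e\<in>E'. q * x e * ?F (zv x (insert e M) g))
      \<ge> ?F (zv x M (g + q * (1 - g)))"
    by (rule step_ineq[OF I(5) I(8) I(9) xu g q E'_def])
  finally show ?case unfolding gs .
qed

lemma exp_bound: "1 \<le> T \<Longrightarrow> (1 - 1 / real T) ^ T \<le> exp (-1)"
proof -
  assume T: "1 \<le> T"
  have "(1 - 1 / real T) ^ T \<le> exp (- 1 / real T) ^ T"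
    using T exp_ge_add_one_self[of "- 1 / real T"] by (intro power_mono) auto
  also have "\<dots> = exp (real T * (- 1 / real T))" by (rule exp_of_nat_mult[symmetric])
  also have "\<dots> = exp (-1)" using T by simp
  finally show ?thesis .
qed

theorem theorem4:
  fixes dummy_u :: 'u and dummy_v :: 'v
  shows "\<forall>\<epsilon>>0. \<exists>\<delta>>0. \<exists>T0::nat. \<forall>T (U::'u set) (V::'v set) E p x f.
     mmp_instance T U V E p x f \<and> T \<ge> T0 \<and> real (card U) \<le> \<delta> * sqrt (real T) \<longrightarrow>
     measure_pmf.expectation (mmp_alg T V E p x) f \<ge> (1 - exp (-1) - \<epsilon>) * multilinear_ext E f x"
proof (intro allI impI exI conjI)
  fix \<epsilon> :: real and T U V E p x f
  assume "0 < \<epsilon>"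
  assume H: "mmp_instance T U V E p x f \<and> 0 \<le> T \<and> real (card U) \<le> 1 * sqrt (real T)"
  then have inst: "mmp_instance T U V E p x f" by blast
  note I = inst_facts[OF inst]
  define c where "c = 1 - (1 - 1 / real T) ^ T"
  have T1: "1 \<le> real T" using I(1) by simp
  have pw: "0 \<le> (1 - 1 / real T) ^ T" "(1 - 1 / real T) ^ T \<le> 1" using T1 by (auto intro: power_le_one)
  have c: "0 \<le> c" "c \<le> 1" using pw unfolding c_def by auto
  have ce: "1 - exp (-1) \<le> c" using exp_bound[OF I(1)] unfolding c_def by simp
  have F0: "0 \<le> multilinear_ext E f x"
    using I(8,9) unfolding monotone_submodular_on_def box_def by (intro ml_nonneg) auto
  have "(1 - exp (-1) - \<epsilon>) * multilinear_ext E f x \<le> c * multilinear_ext E f x"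
    using ce \<open>0 < \<epsilon>\<close> F0 by (intro mult_right_mono) auto
  also have "\<dots> \<le> multilinear_ext E f (\<lambda>e. c * x e)" by (rule ml_scale[OF I(5) I(8) I(9) c])
  also have "\<dots> = multilinear_ext E f (zv x {} c)" by (rule ml_local) (simp add: zv_def)
  also have "\<dots> \<le> measure_pmf.expectation (fwd (round_pmf T V E p x) T {}) f"
    unfolding c_def by (rule main_ind[OF inst]) simp
  also have "\<dots> = measure_pmf.expectation (mmp_alg T V E p x) f"
    unfolding mmp_alg_def mmp_run_fwd ..
  finally show "(1 - exp (-1) - \<epsilon>) * multilinear_ext E f x \<le> measure_pmf.expectation (mmp_alg T V E p x) f" .
qed (rule zero_less_one)

end
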